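(* Let $w,w'\in S_n$ be such that $w$ covers $w'$ in the Bruhat order, with $w=w'\cdot(i,j)$ for positions $i<j$. Let $\alpha=\mathsf{code}(w)$ and $\alpha'=\mathsf{code}(w')$. Let $\underline{w}^{(I)}$ be the reduced word of $w'$ obtained by deleting the $I$-th letter of the row-reading word $\underline{w}$ of $w$, and let $\underline{w'}$ be the row-reading word of $w'$. Then there exists a sequence $f_1f_2\cdots f_p$ of moves, each a commutation or a braid move, transforming $\underline{w}^{(I)}$ into $\underline{w'}$, such that $$\#\{k: f_k \text{ is a braid move}\}=(\alpha_i-\alpha_i'-1)(j-i-1+\alpha_j-\alpha_i'),$$ $$\#\{k: f_k \text{ is a commutation}\}=(\alpha_i-\alpha_i'-1)\Big(\Big(\sum_{k=i}^{j-1}\alpha_k'\Big)-2(j-i-1+\alpha_j-\alpha_i')\Big).$$ Moreover, for any other sequence $g_1g_2\cdots g_q$ of commutations and braid moves transforming $\underline{w}^{(I)}$ into $\underline{w'}$, the number of braid moves among the $g_k$ has the same parity as the number of braid moves among the $f_k$, and likewise for the numbers of commutations.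
   Context: $S_n$ is generated by the simple reflections $s_m=(m,m+1)$, $m\in[n-1]$; permutations are written in one-line notation and $w\cdot(i,j)$ swaps the entries in positions $i$ and $j$. $\ell(w)$ is the number of inversions. The code of $w$ is $\alpha=(\alpha_1,\dots,\alpha_{n-1})$ with $\alpha_m=\#\{k>m: w(k)<w(m)\}$ (set $\alpha_n=0$). The row-reading word of $w$ is $\underline{w}=\underline{w}_1\underline{w}_2\cdots\underline{w}_{n-1}$, where $\underline{w}_m=s_{\alpha_m+m-1}s_{\alpha_m+m-2}\cdots s_{m+1}s_m$ if $\alpha_m>0$ and $\underline{w}_m$ is empty otherwise; it is a reduced word for $w$. $w$ covers $w'$ means $w'<w$ in the Bruhat order with $\ell(w')=\ell(w)-1$; equivalently $w=w'\cdot(i,j)$ with $i<j$, $w'(i)<w'(j)$ and no $k$ with $i<k<j$ and $w'(i)<w'(k)<w'(j)$. In this situation, writing $\underline{w}=s_{r_1}\cdots s_{r_\ell}$, there is a unique index $I$ such that $s_{r_1}\cdots\widehat{s_{r_I}}\cdots s_{r_\ell}$ is a reduced word for $w'$; this word is denoted $\underline{w}^{(I)}$. A commutation replaces two adjacent letters $s_as_b$ with $|a-b|\ge2$ by $s_bs_a$; a braid move replaces three adjacent letters $s_as_{a+1}s_a$ by $s_{a+1}s_as_{a+1}$ or vice versa. *)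

theory Defs
  imports "HOL-Combinatorics.Permutations"
begin

text \<open>Permutations of S_n are functions nat => nat permuting {1..n}
  (one-line notation: w(1), ..., w(n)). Words in simple reflections are lists of
  indices r, where the letter r stands for s_r = (r, r+1).\<close>

definition code :: "nat \<Rightarrow> (nat \<Rightarrow> nat) \<Rightarrow> nat \<Rightarrow> nat" where
  "code n w m = card {k. m < k \<and> k \<le> n \<and> w k < w m}"

definition inv_length :: "nat \<Rightarrow> (nat \<Rightarrow> nat) \<Rightarrow> nat" where
  "inv_length n w = card {(a, b). 1 \<le> a \<and> a < b \<and> b \<le> n \<and> w b < w a}"

text \<open>The permutation s_{r1} ... s_{rl}, composing as functions, so that
  w * (i,j) = w o transpose i j swaps the entries in positions i and j.\<close>
fun word_perm :: "nat list \<Rightarrow> nat \<Rightarrow> nat" where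
  "word_perm [] = id"
| "word_perm (r # rs) = Transposition.transpose r (Suc r) \<circ> word_perm rs"

definition reduced_word_of :: "nat \<Rightarrow> nat list \<Rightarrow> (nat \<Rightarrow> nat) \<Rightarrow> bool" where
  "reduced_word_of n ws w \<longleftrightarrow> (\<forall>r \<in> set ws. 1 \<le> r \<and> r < n) \<and>
      word_perm ws = w \<and> length ws = inv_length n w"

definition row_word :: "nat \<Rightarrow> (nat \<Rightarrow> nat) \<Rightarrow> nat list" where
  "row_word n w = concat (map (\<lambda>m. rev [m..<code n w m + m]) [1..<n])"

text \<open>Delete the I-th letter (1-indexed).\<close>
definition delete_letter :: "nat list \<Rightarrow> nat \<Rightarrow> nat list" where
  "delete_letter ws I = take (I - 1) ws @ drop I ws"

text \<open>w covers w' in Bruhat order, with w = w' * (i,j), i < j.\<close>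
definition covers_by :: "nat \<Rightarrow> (nat \<Rightarrow> nat) \<Rightarrow> (nat \<Rightarrow> nat) \<Rightarrow> nat \<Rightarrow> nat \<Rightarrow> bool" where
  "covers_by n w w' i j \<longleftrightarrow> w' permutes {1..n} \<and> 1 \<le> i \<and> i < j \<and> j \<le> n \<and>
     w = w' \<circ> Transposition.transpose i j \<and> w' i < w' j \<and>
     \<not> (\<exists>k. i < k \<and> k < j \<and> w' i < w' k \<and> w' k < w' j)"

datatype move_kind = Comm | Braid

inductive move :: "nat list \<Rightarrow> move_kind \<Rightarrow> nat list \<Rightarrow> bool" where
  commute: "a + 2 \<le> b \<or> b + 2 \<le> a \<Longrightarrow> move (xs @ [a, b] @ ys) Comm (xs @ [b, a] @ ys)"
| braid1: "move (xs @ [a, Suc a, a] @ ys) Braid (xs @ [Suc a, a, Suc a] @ ys)"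
| braid2: "move (xs @ [Suc a, a, Suc a] @ ys) Braid (xs @ [a, Suc a, a] @ ys)"

inductive move_seq :: "nat list \<Rightarrow> move_kind list \<Rightarrow> nat list \<Rightarrow> bool" where
  nil: "move_seq u [] u"
| cons: "move u f v \<Longrightarrow> move_seq v fs x \<Longrightarrow> move_seq u (f # fs) x"

end

theory Submission
  imports Defs
begin


lemma word_perm_append: "word_perm (xs @ ys) = word_perm xs \<circ> word_perm ys"
  by (induction xs) (auto simp: comp_assoc)

lemma bij_word_perm: "bij (word_perm xs)"
proof (induction xs)
  case Nil then show ?case by (simp add: bij_betw_def inj_on_def)
next
  case (Cons a xs)
  have "bij (Transposition.transpose a (Suc a) \<circ> word_perm xs)"
    by (rule bij_comp[OF Cons bij_transpose])
  then show ?case by (simp add: comp_def)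
qed

lemma inj_word_perm: "inj (word_perm xs)"
  using bij_word_perm bij_is_inj by blast

definition cyc :: "nat \<Rightarrow> nat \<Rightarrow> nat \<Rightarrow> nat" where
  "cyc m a x = (if x = m then m + a else if m < x \<and> x \<le> m + a then x - 1 else x)"

lemma word_perm_block: "word_perm (rev [m..<m+a]) = cyc m a"
proof (induction a)
  case 0 then show ?case by (auto simp: cyc_def fun_eq_iff)
next
  case (Suc a)
  have "rev [m..<m+Suc a] = (m+a) # rev [m..<m+a]" by simp
  then show ?case using Suc
    by (auto simp: cyc_def fun_eq_iff transpose_def)
qed

lemma word_perm_block': "word_perm (rev [m..<a + m]) = cyc m a"
  using word_perm_block[of m a] by (simp add: add.commute)

definition std :: "nat \<Rightarrow> (nat \<Rightarrow> nat) \<Rightarrow> nat \<Rightarrow> nat \<Rightarrow> nat" where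
  "std n w m q = (if m < q \<and> q \<le> n then m + 1 + card {q'. m < q' \<and> q' \<le> n \<and> w q' < w q} else q)"

definition blk :: "nat \<Rightarrow> (nat \<Rightarrow> nat) \<Rightarrow> nat \<Rightarrow> nat list" where
  "blk n w m = rev [m..<code n w m + m]"

lemma word_perm_blk: "word_perm (blk n w m) = cyc m (code n w m)"
  by (simp only: blk_def word_perm_block')

lemma row_word_blk: "row_word n w = concat (map (blk n w) [1..<n])"
  unfolding row_word_def by (intro arg_cong[where f=concat] map_cong) (auto simp: blk_def)

lemma code_le: "code n w m \<le> n - m"
proof -
  have "{k. m < k \<and> k \<le> n \<and> w k < w m} \<subseteq> {m<..n}" by auto
  then have "card {k. m < k \<and> k \<le> n \<and> w k < w m} \<le> card {m<..n}"
    by (intro card_mono) auto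
  then show ?thesis by (simp add: code_def)
qed

lemma std_step:
  assumes inj: "inj_on w {1..n}" and m_def: "m = Suc m0" and mn: "m < n"
  shows "std n w m0 = cyc m (code n w m) \<circ> std n w m"
proof
  fix q
  have m: "1 \<le> m" "m < n" using assms by (auto simp: m_def)
  let ?a = "code n w m"
  have an: "m + ?a \<le> n" using code_le[of n w m] m by simp
  have mx: "\<And>x. m0 < x \<longleftrightarrow> m \<le> x" by (auto simp: m_def)
  show "std n w m0 q = (cyc m (code n w m) \<circ> std n w m) q"
  proof (cases "q = m")
    case True
    have "{q'. m0 < q' \<and> q' \<le> n \<and> w q' < w m} = {k. m < k \<and> k \<le> n \<and> w k < w m}"
      unfolding mx by (auto simp: le_less)
    then have "std n w m0 q = m + ?a" using True m by (simp add: std_def code_def m_def)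
    moreover have "std n w m q = m" using True by (simp add: std_def)
    moreover have "cyc m ?a m = m + ?a" by (simp add: cyc_def)
    ultimately show ?thesis using True by simp
  next
    case False
    show ?thesis
    proof (cases "m < q \<and> q \<le> n")
      case True
      let ?S = "{q'. m < q' \<and> q' \<le> n \<and> w q' < w q}"
      let ?T = "{k. m < k \<and> k \<le> n \<and> w k < w m}"
      have fin: "finite ?S" "finite ?T" by (auto intro: finite_subset[of _ "{..n}"])
      have wne: "w q \<noteq> w m" using inj True m unfolding inj_on_def
        by (metis atLeastAtMost_iff less_imp_le_nat less_le_trans linorder_not_le)
      have eq1: "{q'. m0 < q' \<and> q' \<le> n \<and> w q' < w q} =
          (if w m < w q then insert m ?S else ?S)"
        unfolding mx using True by (auto simp: le_less)
      have sq: "std n w m0 q = m0 + 1 + card {q'. m0 < q' \<and> q' \<le> n \<and> w q' < w q}"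
        using True by (simp add: std_def m_def)
      have sq2: "std n w m q = m + 1 + card ?S"
        using True by (simp add: std_def)
      show ?thesis
      proof (cases "w m < w q")
        case True
        have "?T \<subseteq> ?S" using True by auto
        then have "card ?T \<le> card ?S" using fin by (intro card_mono)
        moreover have "m \<notin> ?S" by simp
        ultimately show ?thesis using sq sq2 True eq1 fin
          by (simp add: cyc_def code_def m_def)
      next
        case False
        then have lt: "w q < w m" using wne by simp
        have "?S \<subset> ?T" using lt \<open>m < q \<and> q \<le> n\<close> by auto
        then have "card ?S < card ?T" using fin by (intro psubset_card_mono)
        then show ?thesis using sq sq2 False eq1 fin
          by (simp add: cyc_def code_def m_def)
      qed
    next
      case nr: False
      have "std n w m0 q = q" using nr False by (auto simp: std_def m_def)
      moreover have "std n w m q = q" using nr by (auto simp: std_def)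
      moreover have "cyc m ?a q = q" using nr False an by (auto simp: cyc_def)
      ultimately show ?thesis by simp
    qed
  qed
qed

lemma word_perm_tail:
  assumes inj: "inj_on w {1..n}" and "m < n"
  shows "word_perm (concat (map (blk n w) [Suc m..<n])) = std n w m"
  using assms(2)
proof (induction "n - m" arbitrary: m)
  case 0 then show ?case by simp
next
  case (Suc d)
  show ?case
  proof (cases "Suc m = n")
    case True
    then have n: "n = Suc m" by simp
    have e: "{q'. m < q' \<and> q' \<le> Suc m \<and> w q' < w (Suc m)} = {}" by (auto simp: le_Suc_eq)
    show ?thesis
    proof
      fix x
      show "word_perm (concat (map (blk n w) [Suc m..<n])) x = std n w m x"
        unfolding n using e by (cases "x = Suc m") (auto simp: std_def)
    qed
  next
    case False
    then have "Suc m < n" using Suc by simp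
    have IH: "word_perm (concat (map (blk n w) [Suc (Suc m)..<n])) = std n w (Suc m)"
      using Suc(1)[of "Suc m"] Suc(2) \<open>Suc m < n\<close> by simp
    have "[Suc m..<n] = Suc m # [Suc (Suc m)..<n]" using \<open>Suc m < n\<close> by (simp add: upt_rec)
    then have "word_perm (concat (map (blk n w) [Suc m..<n])) = cyc (Suc m) (code n w (Suc m)) \<circ> std n w (Suc m)"
      using IH by (simp only: list.map concat.simps word_perm_append word_perm_blk)
    also have "\<dots> = std n w m" using std_step[OF inj refl \<open>Suc m < n\<close>] by simp
    finally show ?thesis .
  qed
qed

lemma std0:
  assumes p: "w permutes {1..n}"
  shows "std n w 0 = w"
proof
  fix q
  have img: "\<And>x. x \<in> {1..n} \<Longrightarrow> w x \<in> {1..n}" using permutes_in_image[OF p] by blast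
  show "std n w 0 q = w q"
  proof (cases "0 < q \<and> q \<le> n")
    case True
    let ?S = "{q'. 0 < q' \<and> q' \<le> n \<and> w q' < w q}"
    have wq: "w q \<le> n" "1 \<le> w q" using img[of q] True by auto
    have "w ` ?S = {1..<w q}"
    proof
      show "w ` ?S \<subseteq> {1..<w q}"
      proof
        fix v assume "v \<in> w ` ?S"
        then obtain x where x: "x \<in> ?S" "v = w x" by blast
        then have "x \<in> {1..n}" by simp
        then have "w x \<in> {1..n}" by (rule img)
        then show "v \<in> {1..<w q}" using x by simp
      qed
      show "{1..<w q} \<subseteq> w ` ?S"
      proof
        fix v assume v: "v \<in> {1..<w q}"
        then have "v \<in> {1..n}" using wq by simp
        then obtain x where x: "x \<in> {1..n}" "w x = v"
          using permutes_image[OF p] by (metis imageE)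
        then show "v \<in> w ` ?S" using v by auto
      qed
    qed
    moreover have "inj_on w ?S" using permutes_inj[OF p] by (simp add: inj_on_def inj_def)
    ultimately have "card ?S = card {1..<w q}" by (metis card_image)
    then have "card ?S = w q - 1" by simp
    then show ?thesis using True wq by (simp add: std_def)
  next
    case False
    then have "q \<notin> {1..n}" by auto
    then have "w q = q" using p by (simp add: permutes_def)
    moreover have "std n w 0 q = q" using False unfolding std_def by auto
    ultimately show ?thesis by simp
  qed
qed

lemma word_perm_row_word:
  assumes p: "w permutes {1..n}"
  shows "word_perm (row_word n w) = w"
proof (cases "n = 0")
  case True
  then show ?thesis using p by (auto simp: row_word_def permutes_def fun_eq_iff)
next
  case False
  have inj: "inj_on w {1..n}" using p by (meson inj_on_subset permutes_inj subset_UNIV)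
  show ?thesis using word_perm_tail[OF inj, of 0] False std0[OF p]
    by (simp add: row_word_blk)
qed



lemma del_concat:
  assumes "1 \<le> I" "I \<le> length (concat xss)"
  shows "\<exists>t p. t < length xss \<and> p < length (xss!t) \<and>
    delete_letter (concat xss) I = concat (take t xss) @ (take p (xss!t) @ drop (Suc p) (xss!t)) @ concat (drop (Suc t) xss)"
  using assms
proof (induction xss arbitrary: I)
  case Nil then show ?case by simp
next
  case (Cons ys yss)
  show ?case
  proof (cases "I \<le> length ys")
    case True
    have "delete_letter (concat (ys # yss)) I = (take (I - 1) ys @ drop (Suc (I - 1)) ys) @ concat yss"
      using True Cons.prems by (simp add: delete_letter_def)
    then show ?thesis using True Cons.prems
      by (intro exI[of _ 0] exI[of _ "I - 1"]) auto
  next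
    case False
    let ?I = "I - length ys"
    have "1 \<le> ?I" "?I \<le> length (concat yss)" using False Cons.prems by auto
    from Cons.IH[OF this] obtain t p where tp: "t < length yss" "p < length (yss!t)"
      "delete_letter (concat yss) ?I = concat (take t yss) @ (take p (yss!t) @ drop (Suc p) (yss!t)) @ concat (drop (Suc t) yss)"
      by blast
    have "delete_letter (concat (ys # yss)) I = ys @ delete_letter (concat yss) ?I"
      using False by (simp add: delete_letter_def)
    then show ?thesis using tp
      by (intro exI[of _ "Suc t"] exI[of _ p]) auto
  qed
qed

lemma rev_upt_split:
  assumes "m \<le> k" "k < m + a"
  shows "rev [m..<m+a] = rev [Suc k..<m+a] @ k # rev [m..<k]"
proof -
  have "[m..<m+a] = [m..<k] @ k # [Suc k..<m+a]"
  proof -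
    have "[m..<m+a] = [m..<k] @ [k..<k + (m + a - k)]"
      using upt_add_eq_append[of m k "m + a - k"] assms by simp
    also have "[k..<k + (m + a - k)] = k # [Suc k..<m+a]"
      using assms by (simp add: upt_conv_Cons)
    finally show ?thesis .
  qed
  then show ?thesis by simp
qed

lemma block_delete:
  assumes "p < a" "k = m + a - 1 - p"
  shows "take p (rev [m..<m+a]) @ drop (Suc p) (rev [m..<m+a]) = rev [Suc k..<m+a] @ rev [m..<k]"
proof -
  have mk: "m \<le> k" "k < m + a" using assms by auto
  have l: "length (rev [Suc k..<m+a]) = p" using assms by simp
  show ?thesis unfolding rev_upt_split[OF mk] using l by simp
qed

lemma block_delete_perm:
  assumes "m \<le> k" "k < m + a"
  shows "word_perm (rev [Suc k..<m+a] @ rev [m..<k]) = cyc m a \<circ> Transposition.transpose m (Suc k)"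
proof -
  let ?A = "word_perm (rev [Suc k..<m+a])"
  have B: "word_perm (rev [m..<k]) = cyc m (k - m)" using word_perm_block[of m "k-m"] assms by simp
  have sw: "Transposition.transpose k (Suc k) \<circ> cyc m (k - m) = cyc m (k - m) \<circ> Transposition.transpose m (Suc k)"
  proof
    fix x
    show "(Transposition.transpose k (Suc k) \<circ> cyc m (k - m)) x = (cyc m (k - m) \<circ> Transposition.transpose m (Suc k)) x"
      using assms by (cases "x = m"; cases "x = Suc k"; cases "m < x \<and> x \<le> k") (auto simp: cyc_def transpose_def)
  qed
  have "cyc m a = ?A \<circ> Transposition.transpose k (Suc k) \<circ> cyc m (k - m)"
    using word_perm_block[of m a] unfolding rev_upt_split[OF assms]
    by (simp add: word_perm_append B comp_assoc)
  then have "cyc m a \<circ> Transposition.transpose m (Suc k) = ?A \<circ> cyc m (k - m)"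
    by (simp add: comp_assoc sw)
  then show ?thesis by (simp add: word_perm_append B)
qed


lemma bij_std:
  assumes p: "w permutes {1..n}" and "m < n"
  shows "bij (std n w m)"
proof -
  have inj: "inj_on w {1..n}" using p by (meson inj_on_subset permutes_inj subset_UNIV)
  show ?thesis using word_perm_tail[OF inj \<open>m < n\<close>] bij_word_perm by metis
qed

lemma std_transpose:
  assumes b: "bij f" and fm: "f m = m" and fq: "f q = c"
  shows "Transposition.transpose m c \<circ> f = f \<circ> Transposition.transpose m q"
proof
  fix x
  have inj: "inj f" using b bij_is_inj by blast
  show "(Transposition.transpose m c \<circ> f) x = (f \<circ> Transposition.transpose m q) x"
  proof (cases "x = m")
    case True then show ?thesis using fm fq by simp
  next
    case False
    show ?thesis
    proof (cases "x = q")
      case True then show ?thesis using fm fq False by (simp add: transpose_def)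
    next
      case False2: False
      have "f x \<noteq> m" using inj fm False by (metis injD)
      moreover have "f x \<noteq> c" using inj fq False2 by (metis injD)
      ultimately show ?thesis using False False2 by (simp add: transpose_def)
    qed
  qed
qed

lemma delete_row_word:
  assumes p: "w permutes {1..n}" and I: "1 \<le> I" "I \<le> length (row_word n w)"
  shows "\<exists>m k q. 1 \<le> m \<and> m < n \<and> m \<le> k \<and> k < m + code n w m \<and> m < q \<and> q \<le> n \<and>
     std n w m q = Suc k \<and>
     delete_letter (row_word n w) I = concat (map (blk n w) [1..<m]) @ (rev [Suc k..<m + code n w m] @ rev [m..<k]) @ concat (map (blk n w) [Suc m..<n]) \<and>
     word_perm (delete_letter (row_word n w) I) = w \<circ> Transposition.transpose m q"
proof -
  have inj: "inj_on w {1..n}" using p by (meson inj_on_subset permutes_inj subset_UNIV)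
  let ?xss = "map (blk n w) [1..<n]"
  obtain t p where tp: "t < length ?xss" "p < length (?xss!t)"
    "delete_letter (concat ?xss) I = concat (take t ?xss) @ (take p (?xss!t) @ drop (Suc p) (?xss!t)) @ concat (drop (Suc t) ?xss)"
    using del_concat[of I ?xss] I unfolding row_word_blk by blast
  define m where "m = Suc t"
  let ?a = "code n w m"
  have mn: "1 \<le> m" "m < n" using tp(1) by (auto simp: m_def)
  have xt: "?xss ! t = rev [m..<m + ?a]" using tp(1) by (simp add: m_def blk_def add.commute)
  have pa: "p < ?a" using tp(2) xt by simp
  define k where "k = m + ?a - 1 - p"
  have mk: "m \<le> k" "k < m + ?a" using pa by (auto simp: k_def)
  have tk: "take t ?xss = map (blk n w) [1..<m]" using tp(1) by (simp add: m_def take_map)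
  have dk: "drop (Suc t) ?xss = map (blk n w) [Suc m..<n]" using tp(1) by (simp add: m_def drop_map)
  have del: "delete_letter (row_word n w) I = concat (map (blk n w) [1..<m]) @ (rev [Suc k..<m + ?a] @ rev [m..<k]) @ concat (map (blk n w) [Suc m..<n])"
    unfolding row_word_blk tp(3) tk dk xt block_delete[OF pa k_def] ..
  have bs: "bij (std n w m)" using bij_std[OF p mn(2)] .
  obtain q where q: "std n w m q = Suc k" using bs by (metis bij_pointE)
  have qr: "m < q \<and> q \<le> n"
  proof (rule ccontr)
    assume "\<not> (m < q \<and> q \<le> n)"
    then have "std n w m q = q" by (auto simp: std_def)
    then have "q = Suc k" using q by simp
    moreover have "Suc k \<le> n" using mk code_le[of n w m] mn by simp
    ultimately show False using \<open>\<not> (m < q \<and> q \<le> n)\<close> mk by simp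
  qed
  have smm: "std n w m m = m" by (simp add: std_def)
  let ?P = "word_perm (concat (map (blk n w) [1..<m]))"
  have split: "[1..<n] = [1..<m] @ m # [Suc m..<n]"
    using mn by (metis Suc_lessD le_Suc_ex upt_add_eq_append upt_conv_Cons add_Suc_right le_add1 less_imp_le_nat)
  have W: "w = ?P \<circ> cyc m ?a \<circ> std n w m"
  proof -
    have "w = word_perm (row_word n w)" using word_perm_row_word[OF p] by simp
    also have "\<dots> = ?P \<circ> cyc m ?a \<circ> std n w m"
      unfolding row_word_blk split using word_perm_tail[OF inj mn(2)]
      by (simp add: word_perm_append word_perm_blk comp_assoc)
    finally show ?thesis .
  qed
  have "word_perm (delete_letter (row_word n w) I) = ?P \<circ> (cyc m ?a \<circ> Transposition.transpose m (Suc k)) \<circ> std n w m"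
    unfolding del word_perm_append[of "concat (map (blk n w) [1..<m])"]
      word_perm_append[of "rev [Suc k..<m + ?a] @ rev [m..<k]"] block_delete_perm[OF mk]
      word_perm_tail[OF inj mn(2)] by (simp add: comp_assoc)
  also have "\<dots> = ?P \<circ> cyc m ?a \<circ> (Transposition.transpose m (Suc k) \<circ> std n w m)"
    by (simp add: comp_assoc)
  also have "\<dots> = ?P \<circ> cyc m ?a \<circ> (std n w m \<circ> Transposition.transpose m q)"
    using std_transpose[OF bs smm q] by simp
  also have "\<dots> = w \<circ> Transposition.transpose m q" by (subst W) (simp add: comp_assoc)
  finally show ?thesis using mn mk qr q del by blast
qed



lemma fin_range: "finite {q. a < q \<and> q \<le> (n::nat) \<and> P q}"
  by (rule finite_subset[of _ "{..n}"]) auto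

lemma fin_range': "finite {q. a \<le> q \<and> q \<le> (n::nat) \<and> P q}"
  by (rule finite_subset[of _ "{..n}"]) auto

lemma cover_basic:
  assumes cov: "covers_by n w w' i j"
  shows "w' permutes {1..n}" "w permutes {1..n}" "1 \<le> i" "i < j" "j \<le> n"
    "w i = w' j" "w j = w' i" "\<And>q. q \<noteq> i \<Longrightarrow> q \<noteq> j \<Longrightarrow> w q = w' q"
    "w' i < w' j" "inj w'"
    "\<And>m. i < m \<Longrightarrow> m < j \<Longrightarrow> w' m < w' i \<or> w' j < w' m"
proof -
  have p: "w' permutes {1..n}" and ij: "1 \<le> i" "i < j" "j \<le> n"
    and ww: "w = w' \<circ> Transposition.transpose i j" and lt: "w' i < w' j"
    and nb: "\<not> (\<exists>k. i < k \<and> k < j \<and> w' i < w' k \<and> w' k < w' j)"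
    using cov by (auto simp: covers_by_def)
  show "w' permutes {1..n}" "1 \<le> i" "i < j" "j \<le> n" "w' i < w' j" by fact+
  show "w permutes {1..n}" unfolding ww
    by (rule permutes_compose[OF permutes_swap_id p]) (use ij in auto)
  show "w i = w' j" "w j = w' i" using ww by auto
  show "\<And>q. q \<noteq> i \<Longrightarrow> q \<noteq> j \<Longrightarrow> w q = w' q" using ww by auto
  show inj: "inj w'" using p permutes_inj by blast
  fix m assume m: "i < m" "m < j"
  have "w' m \<noteq> w' i" "w' m \<noteq> w' j" using m inj by (auto dest: injD)
  then show "w' m < w' i \<or> w' j < w' m" using nb m by force
qed

definition cc :: "nat \<Rightarrow> (nat \<Rightarrow> nat) \<Rightarrow> nat \<Rightarrow> nat \<Rightarrow> nat" where
  "cc n w' i j = card {q. j < q \<and> q \<le> n \<and> w' i < w' q \<and> w' q < w' j}"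

lemma code_other:
  assumes cov: "covers_by n w w' i j" and m: "m \<noteq> i" "m \<noteq> j"
  shows "code n w m = code n w' m"
proof -
  note cb = cover_basic[OF cov]
  have wm: "w m = w' m" using cb(8) m by simp
  consider "m < i" | "j < m" | "i < m \<and> m < j" using m cb(4) by linarith
  then show ?thesis
  proof cases
    case 1
    let ?A = "{k. m < k \<and> k \<le> n \<and> w k < w m}"
    let ?B = "{k. m < k \<and> k \<le> n \<and> w' k < w' m}"
    have "Transposition.transpose i j ` ?A = ?B"
    proof
      show "Transposition.transpose i j ` ?A \<subseteq> ?B"
        using 1 cb(4,5,6,7,8) wm by (auto simp: transpose_def)
      show "?B \<subseteq> Transposition.transpose i j ` ?A"
      proof
        fix x assume x: "x \<in> ?B"
        have "Transposition.transpose i j x \<in> ?A"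
          using x 1 cb(4,5,6,7,8) wm by (auto simp: transpose_def)
        then show "x \<in> Transposition.transpose i j ` ?A"
          by (metis image_eqI transpose_involutory)
      qed
    qed
    moreover have "card (Transposition.transpose i j ` ?A) = card ?A"
      by (rule card_image[OF inj_on_transpose])
    ultimately have "card ?B = card ?A" by simp
    then show ?thesis unfolding code_def by simp
  next
    case 2
    have "{k. m < k \<and> k \<le> n \<and> w k < w m} = {k. m < k \<and> k \<le> n \<and> w' k < w' m}"
      using 2 cb(4,8) wm by auto
    then show ?thesis by (simp add: code_def)
  next
    case 3
    have "{k. m < k \<and> k \<le> n \<and> w k < w m} = {k. m < k \<and> k \<le> n \<and> w' k < w' m}"
    proof (rule Collect_cong)
      fix k
      show "(m < k \<and> k \<le> n \<and> w k < w m) = (m < k \<and> k \<le> n \<and> w' k < w' m)"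
      proof (cases "k = j")
        case True
        then show ?thesis using cb(7,9) cb(11)[of m] 3 wm by auto
      next
        case False
        then show ?thesis using cb(8)[of k] 3 wm by auto
      qed
    qed
    then show ?thesis by (simp add: code_def)
  qed
qed

lemma code_i:
  assumes cov: "covers_by n w w' i j"
  shows "code n w i = code n w' i + 1 + cc n w' i j"
proof -
  note cb = cover_basic[OF cov]
  let ?B = "{q. i < q \<and> q \<le> n \<and> w' q < w' i}"
  let ?S = "{q. j < q \<and> q \<le> n \<and> w' i < w' q \<and> w' q < w' j}"
  have inj: "inj w'" by (rule cb(10))
  have "{q. i < q \<and> q \<le> n \<and> w q < w i} = insert j (?B \<union> ?S)"
  proof (rule set_eqI)
    fix q
    show "q \<in> {q. i < q \<and> q \<le> n \<and> w q < w i} \<longleftrightarrow> q \<in> insert j (?B \<union> ?S)"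
    proof (cases "q = j")
      case True then show ?thesis using cb(4,5,6,7,9) by auto
    next
      case False
      have wq: "w q = w' q" if "i < q" using cb(8)[of q] that False by simp
      have ne: "w' q \<noteq> w' i" if "i < q" using inj that by (auto dest: injD)
      show ?thesis
      proof
        assume "q \<in> {q. i < q \<and> q \<le> n \<and> w q < w i}"
        then have q: "i < q" "q \<le> n" "w' q < w' j" using wq cb(6) by auto
        show "q \<in> insert j (?B \<union> ?S)"
        proof (cases "w' q < w' i")
          case True then show ?thesis using q by auto
        next
          case F: False
          then have "w' i < w' q" using ne q(1) by simp
          moreover have "\<not> q < j" using cb(11)[of q] q F \<open>w' i < w' q\<close> by auto
          ultimately show ?thesis using q False by auto
        qed
      next
        assume "q \<in> insert j (?B \<union> ?S)"
        then show "q \<in> {q. i < q \<and> q \<le> n \<and> w q < w i}"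
          using False wq cb(4,6,9) by auto
      qed
    qed
  qed
  moreover have "j \<notin> ?B \<union> ?S" using cb(9) by auto
  moreover have "?B \<inter> ?S = {}" by auto
  moreover have "finite ?B" "finite ?S" using fin_range by auto
  ultimately have "card {q. i < q \<and> q \<le> n \<and> w q < w i} = Suc (card ?B + card ?S)"
    by (simp add: card_Un_disjoint)
  then show ?thesis by (simp add: code_def cc_def)
qed

lemma code_j:
  assumes cov: "covers_by n w w' i j"
  shows "code n w' j = code n w j + cc n w' i j"
proof -
  note cb = cover_basic[OF cov]
  let ?B = "{q. j < q \<and> q \<le> n \<and> w' q < w' i}"
  let ?S = "{q. j < q \<and> q \<le> n \<and> w' i < w' q \<and> w' q < w' j}"
  have inj: "inj w'" by (rule cb(10))
  have e1: "{q. j < q \<and> q \<le> n \<and> w' q < w' j} = ?B \<union> ?S"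
  proof (rule set_eqI)
    fix q
    show "q \<in> {q. j < q \<and> q \<le> n \<and> w' q < w' j} \<longleftrightarrow> q \<in> ?B \<union> ?S"
    proof (cases "j < q")
      case True
      have "q \<noteq> i" using True cb(4) by simp
      then have ne: "w' q \<noteq> w' i" using inj by (metis injD)
      have "w' q < w' j \<longleftrightarrow> w' q < w' i \<or> (w' i < w' q \<and> w' q < w' j)"
        using ne cb(9) by linarith
      then show ?thesis using True by blast
    next
      case False then show ?thesis by blast
    qed
  qed
  have e2: "{q. j < q \<and> q \<le> n \<and> w q < w j} = ?B"
  proof (rule Collect_cong)
    fix q
    show "(j < q \<and> q \<le> n \<and> w q < w j) = (j < q \<and> q \<le> n \<and> w' q < w' i)"
    proof (cases "j < q")
      case True
      then have "w q = w' q" using cb(8)[of q] cb(4) by simp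
      then show ?thesis using cb(7) by simp
    qed simp
  qed
  have "?B \<inter> ?S = {}" by auto
  then have "card (?B \<union> ?S) = card ?B + card ?S"
    using fin_range[of j n] by (intro card_Un_disjoint) auto
  then show ?thesis unfolding code_def cc_def e1 e2 by simp
qed

lemma std_ij:
  assumes cov: "covers_by n w w' i j"
  shows "std n w i j = Suc (i + code n w' i)"
proof -
  note cb = cover_basic[OF cov]
  have "{q'. i < q' \<and> q' \<le> n \<and> w q' < w j} = {q. i < q \<and> q \<le> n \<and> w' q < w' i}"
  proof (rule Collect_cong)
    fix q
    show "(i < q \<and> q \<le> n \<and> w q < w j) = (i < q \<and> q \<le> n \<and> w' q < w' i)"
      using cb(7,9) cb(8)[of q] by (cases "q = j") auto
  qed
  then show ?thesis using cb(4,5) by (simp add: std_def code_def)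
qed

definition cnt :: "nat \<Rightarrow> (nat \<Rightarrow> nat) \<Rightarrow> nat \<Rightarrow> nat \<Rightarrow> nat" where
  "cnt n w' i m = card {q. m \<le> q \<and> q \<le> n \<and> w' q < w' i}"

lemma cnt_Suc_i: "cnt n w' i (Suc i) = code n w' i"
  unfolding cnt_def code_def by (simp add: Suc_le_eq)

lemma cnt_j:
  assumes cov: "covers_by n w w' i j"
  shows "cnt n w' i j = code n w j"
proof -
  note cb = cover_basic[OF cov]
  have "{q. j \<le> q \<and> q \<le> n \<and> w' q < w' i} = {k. j < k \<and> k \<le> n \<and> w k < w j}"
  proof (rule Collect_cong)
    fix q
    show "(j \<le> q \<and> q \<le> n \<and> w' q < w' i) = (j < q \<and> q \<le> n \<and> w q < w j)"
      using cb(4,7,9) cb(8)[of q] by (cases "q = j") auto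
  qed
  then show ?thesis by (simp add: cnt_def code_def)
qed

lemma cnt_step:
  assumes "m \<le> n"
  shows "cnt n w' i m = cnt n w' i (Suc m) + (if w' m < w' i then 1 else 0)"
proof -
  have e: "{q. m \<le> q \<and> q \<le> n \<and> w' q < w' i} =
     (if w' m < w' i then insert m {q. Suc m \<le> q \<and> q \<le> n \<and> w' q < w' i} else {q. Suc m \<le> q \<and> q \<le> n \<and> w' q < w' i})"
    using assms by (auto simp: le_less Suc_le_eq)
  show ?thesis unfolding cnt_def e using fin_range' by simp
qed

lemma cnt_comm:
  assumes "w' m < w' i" "m \<le> n"
  shows "code n w' m + 1 \<le> cnt n w' i m"
proof -
  have "{k. m < k \<and> k \<le> n \<and> w' k < w' m} \<subseteq> {q. Suc m \<le> q \<and> q \<le> n \<and> w' q < w' i}"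
    using assms by auto
  then have "code n w' m \<le> cnt n w' i (Suc m)" unfolding code_def cnt_def
    by (intro card_mono fin_range')
  then show ?thesis using cnt_step[where w'=w' and i=i, OF assms(2)] assms by simp
qed

lemma cnt_braid:
  assumes cov: "covers_by n w w' i j" and m: "i < m" "m < j" "w' j < w' m"
  shows "cnt n w' i (Suc m) + 1 + cc n w' i j \<le> code n w' m"
proof -
  note cb = cover_basic[OF cov]
  let ?A = "{q. Suc m \<le> q \<and> q \<le> n \<and> w' q < w' i}"
  let ?S = "{q. j < q \<and> q \<le> n \<and> w' i < w' q \<and> w' q < w' j}"
  have sub: "insert j (?A \<union> ?S) \<subseteq> {k. m < k \<and> k \<le> n \<and> w' k < w' m}"
    using m cb(5,9) by auto
  have "j \<notin> ?A \<union> ?S" using cb(9) by auto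
  moreover have "?A \<inter> ?S = {}" by auto
  moreover have "finite ?A" "finite ?S" using fin_range fin_range' by auto
  ultimately have "card (insert j (?A \<union> ?S)) = Suc (card ?A + card ?S)"
    by (simp add: card_Un_disjoint)
  moreover have "card (insert j (?A \<union> ?S)) \<le> code n w' m"
    unfolding code_def by (intro card_mono[OF fin_range sub])
  ultimately show ?thesis by (simp add: cnt_def cc_def)
qed



definition ms :: "nat list \<Rightarrow> nat \<Rightarrow> nat \<Rightarrow> nat list \<Rightarrow> bool" where
  "ms u B C v \<longleftrightarrow> (\<exists>fs. move_seq u fs v \<and> count_list fs Braid = B \<and> count_list fs Comm = C)"

lemma move_seq_append:
  assumes "move_seq u fs v" "move_seq v gs x"
  shows "move_seq u (fs @ gs) x"
  using assms by (induction rule: move_seq.induct) (auto intro: move_seq.intros)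

lemma move_ctx:
  assumes "move u f v"
  shows "move (p @ u @ s) f (p @ v @ s)"
  using assms
proof (cases rule: move.cases)
  case (commute a b xs ys)
  then show ?thesis using move.commute[of a b "p @ xs" "ys @ s"] by simp
next
  case (braid1 xs a ys)
  then show ?thesis using move.braid1[of "p @ xs" a "ys @ s"] by simp
next
  case (braid2 xs a ys)
  then show ?thesis using move.braid2[of "p @ xs" a "ys @ s"] by simp
qed

lemma move_seq_ctx:
  assumes "move_seq u fs v"
  shows "move_seq (p @ u @ s) fs (p @ v @ s)"
  using assms by (induction rule: move_seq.induct) (auto intro: move_seq.intros move_ctx)

lemma ms_refl: "ms u 0 0 u"
  unfolding ms_def by (intro exI[of _ "[]"]) (auto intro: move_seq.nil)

lemma ms_trans:
  assumes "ms u B C v" "ms v B' C' x"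
  shows "ms u (B + B') (C + C') x"
  using assms unfolding ms_def by (auto intro!: move_seq_append)

lemma ms_trans':
  assumes "ms u B C v" "ms v B' C' x" "B'' = B + B'" "C'' = C + C'"
  shows "ms u B'' C'' x"
  using ms_trans[OF assms(1,2)] assms(3,4) by simp

lemma ms_ctx:
  assumes "ms u B C v"
  shows "ms (p @ u @ s) B C (p @ v @ s)"
  using assms unfolding ms_def by (auto intro!: move_seq_ctx)

lemma ms_comm1:
  assumes "a + 2 \<le> b \<or> b + 2 \<le> a"
  shows "ms [a, b] 0 1 [b, a]"
proof -
  have "move ([] @ [a, b] @ []) Comm ([] @ [b, a] @ [])" using assms by (rule move.commute)
  then have "move_seq [a, b] [Comm] [b, a]" by (auto intro: move_seq.intros)
  then show ?thesis unfolding ms_def by (intro exI[of _ "[Comm]"]) simp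
qed

lemma ms_braid1: "ms [a, Suc a, a] 1 0 [Suc a, a, Suc a]"
proof -
  have "move ([] @ [a, Suc a, a] @ []) Braid ([] @ [Suc a, a, Suc a] @ [])" by (rule move.braid1)
  then have "move_seq [a, Suc a, a] [Braid] [Suc a, a, Suc a]" by (auto intro: move_seq.intros)
  then show ?thesis unfolding ms_def by (intro exI[of _ "[Braid]"]) simp
qed

lemma pass_comm:
  assumes "\<forall>r\<in>set R. y + 2 \<le> r \<or> r + 2 \<le> y"
  shows "ms (y # R) 0 (length R) (R @ [y])"
  using assms
proof (induction R)
  case Nil then show ?case by (simp add: ms_refl)
next
  case (Cons r R)
  have "ms ([] @ [y, r] @ R) 0 1 ([] @ [r, y] @ R)"
    using Cons.prems by (intro ms_ctx ms_comm1) auto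
  moreover have "ms ([r] @ (y # R) @ []) 0 (length R) ([r] @ (R @ [y]) @ [])"
    using Cons by (intro ms_ctx) auto
  ultimately have "ms (y # r # R) (0 + 0) (1 + length R) (r # R @ [y])"
    by (auto dest: ms_trans)
  then show ?case by simp
qed

lemma pass_braid:
  assumes "m \<le> y" "y + 2 \<le> m + a"
  shows "ms (y # rev [m..<m+a]) 1 (a - 2) (rev [m..<m+a] @ [Suc y])"
proof -
  let ?R1 = "rev [Suc (Suc y)..<m+a]" and ?R2 = "rev [m..<y]"
  have sp: "rev [m..<m+a] = ?R1 @ [Suc y, y] @ ?R2"
  proof -
    have "rev [m..<m+a] = ?R1 @ Suc y # rev [m..<Suc y]"
      using rev_upt_split[of m "Suc y" a] assms by simp
    moreover have "rev [m..<Suc y] = y # ?R2" using assms by simp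
    ultimately show ?thesis by simp
  qed
  have l1: "length ?R1 = m + a - y - 2" and l2: "length ?R2 = y - m" by auto
  have s1: "ms ([] @ (y # ?R1) @ ([Suc y, y] @ ?R2)) 0 (length ?R1) ([] @ (?R1 @ [y]) @ ([Suc y, y] @ ?R2))"
    by (intro ms_ctx pass_comm) auto
  have s2: "ms (?R1 @ [y, Suc y, y] @ ?R2) 1 0 (?R1 @ [Suc y, y, Suc y] @ ?R2)"
    by (intro ms_ctx ms_braid1)
  have s3: "ms ((?R1 @ [Suc y, y]) @ (Suc y # ?R2) @ []) 0 (length ?R2) ((?R1 @ [Suc y, y]) @ (?R2 @ [Suc y]) @ [])"
    by (intro ms_ctx pass_comm) auto
  have "ms (y # rev [m..<m+a]) (0 + 1 + 0) (length ?R1 + 0 + length ?R2) (rev [m..<m+a] @ [Suc y])"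
    unfolding sp using ms_trans[OF ms_trans[OF s1[simplified] s2[simplified]] s3[simplified]] by simp
  moreover have "length ?R1 + 0 + length ?R2 = a - 2" using assms by simp
  ultimately show ?thesis by simp
qed

definition pass_ok :: "nat \<Rightarrow> nat \<Rightarrow> nat \<Rightarrow> nat \<Rightarrow> bool" where
  "pass_ok m a y y' \<longleftrightarrow> (y' = y \<and> (y + 2 \<le> m \<or> m + a + 1 \<le> y)) \<or> (y' = Suc y \<and> m \<le> y \<and> y + 2 \<le> m + a)"

lemma pass_block:
  assumes "pass_ok m a y y'"
  shows "y \<le> y' \<and> 2 * (y' - y) \<le> a \<and> ms (y # rev [m..<a+m]) (y' - y) (a - 2 * (y' - y)) (rev [m..<a+m] @ [y'])"
proof (cases "y' = y \<and> (y + 2 \<le> m \<or> m + a + 1 \<le> y)")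
  case True
  have "ms (y # rev [m..<a+m]) 0 (length (rev [m..<a+m])) (rev [m..<a+m] @ [y])"
    using True by (intro pass_comm) auto
  then show ?thesis using True by simp
next
  case False
  then have F: "y' = Suc y" "m \<le> y" "y + 2 \<le> m + a" using assms by (auto simp: pass_ok_def)
  then show ?thesis using pass_braid[of m y a] by (simp add: add.commute numeral_2_eq_2)
qed

lemma pass_blocks:
  assumes "lo \<le> hi" "\<And>m. lo \<le> m \<Longrightarrow> m < hi \<Longrightarrow> pass_ok m (\<alpha> m) (g m) (g (Suc m))"
  shows "g lo \<le> g hi \<and> 2 * (g hi - g lo) \<le> (\<Sum>m = lo..<hi. \<alpha> m) \<and>
    ms (g lo # concat (map (\<lambda>m. rev [m..<\<alpha> m + m]) [lo..<hi])) (g hi - g lo)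
       ((\<Sum>m = lo..<hi. \<alpha> m) - 2 * (g hi - g lo)) (concat (map (\<lambda>m. rev [m..<\<alpha> m + m]) [lo..<hi]) @ [g hi])"
  using assms
proof (induction hi)
  case 0 then show ?case by (simp add: ms_refl)
next
  case (Suc hi)
  show ?case
  proof (cases "lo = Suc hi")
    case True then show ?thesis by (simp add: ms_refl)
  next
    case False
    then have lh: "lo \<le> hi" using Suc.prems by simp
    have IH: "g lo \<le> g hi \<and> 2 * (g hi - g lo) \<le> (\<Sum>m = lo..<hi. \<alpha> m) \<and>
      ms (g lo # concat (map (\<lambda>m. rev [m..<\<alpha> m + m]) [lo..<hi])) (g hi - g lo)
       ((\<Sum>m = lo..<hi. \<alpha> m) - 2 * (g hi - g lo)) (concat (map (\<lambda>m. rev [m..<\<alpha> m + m]) [lo..<hi]) @ [g hi])"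
      using Suc.IH[OF lh] Suc.prems by simp
    have pb: "g hi \<le> g (Suc hi) \<and> 2 * (g (Suc hi) - g hi) \<le> \<alpha> hi \<and>
      ms (g hi # rev [hi..<\<alpha> hi + hi]) (g (Suc hi) - g hi) (\<alpha> hi - 2 * (g (Suc hi) - g hi)) (rev [hi..<\<alpha> hi + hi] @ [g (Suc hi)])"
      using pass_block Suc.prems(2)[of hi] lh by simp
    let ?X = "concat (map (\<lambda>m. rev [m..<\<alpha> m + m]) [lo..<hi])"
    let ?Bh = "rev [hi..<\<alpha> hi + hi]"
    have e: "concat (map (\<lambda>m. rev [m..<\<alpha> m + m]) [lo..<Suc hi]) = ?X @ ?Bh" using lh by simp
    have sum: "(\<Sum>m = lo..<Suc hi. \<alpha> m) = (\<Sum>m = lo..<hi. \<alpha> m) + \<alpha> hi" using lh by simp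
    have m1: "ms ([] @ (g lo # ?X) @ ?Bh) (g hi - g lo) ((\<Sum>m = lo..<hi. \<alpha> m) - 2 * (g hi - g lo)) ([] @ (?X @ [g hi]) @ ?Bh)"
      using IH by (intro ms_ctx) simp
    have m2: "ms (?X @ (g hi # ?Bh) @ []) (g (Suc hi) - g hi) (\<alpha> hi - 2 * (g (Suc hi) - g hi)) (?X @ (?Bh @ [g (Suc hi)]) @ [])"
      using pb by (intro ms_ctx) simp
    have "ms (g lo # ?X @ ?Bh) (g (Suc hi) - g lo) ((\<Sum>m = lo..<Suc hi. \<alpha> m) - 2 * (g (Suc hi) - g lo)) (?X @ ?Bh @ [g (Suc hi)])"
      by (rule ms_trans'[OF m1[simplified] m2[simplified]]) (use IH pb sum in auto)
    then show ?thesis unfolding e using IH pb sum by auto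
  qed
qed

lemma pass_run:
  assumes "\<And>l. l < c \<Longrightarrow> ms ((y0 + l) # Y) B C (Y @ [y0 + l + d])"
  shows "ms (rev [y0..<y0+c] @ Y) (c * B) (c * C) (Y @ rev [y0+d..<y0+c+d])"
  using assms
proof (induction c)
  case 0 then show ?case by (simp add: ms_refl)
next
  case (Suc c)
  have IH: "ms (rev [y0..<y0+c] @ Y) (c * B) (c * C) (Y @ rev [y0+d..<y0+c+d])"
    using Suc by simp
  have m1: "ms ([y0 + c] @ (rev [y0..<y0+c] @ Y) @ []) (c * B) (c * C) ([y0 + c] @ (Y @ rev [y0+d..<y0+c+d]) @ [])"
    using IH by (rule ms_ctx)
  have m2: "ms ([] @ ((y0 + c) # Y) @ rev [y0+d..<y0+c+d]) B C ([] @ (Y @ [y0 + c + d]) @ rev [y0+d..<y0+c+d])"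
    using Suc.prems[of c] by (intro ms_ctx) simp
  have "ms (rev [y0..<y0+Suc c] @ Y) (c * B + B) (c * C + C) (Y @ rev [y0+d..<y0+Suc c+d])"
    using ms_trans[OF m1[simplified] m2[simplified]] by (simp add: add.commute add.left_commute)
  then show ?case by (simp add: add.commute)
qed



lemma letter_pass:
  assumes cov: "covers_by n w w' i j" and l: "l < cc n w' i j"
  defines "y0 \<equiv> Suc (i + code n w' i)"
  defines "L \<equiv> rev [i..<code n w' i + i]"
  defines "Mid \<equiv> concat (map (blk n w') [Suc i..<j])"
  defines "b \<equiv> (j + code n w j) - y0"
  defines "S \<equiv> (\<Sum>m = Suc i..<j. code n w' m)"
  shows "y0 \<le> j + code n w j \<and> 2 * b \<le> S \<and>
    ms ((y0 + l) # (L @ Mid)) b (code n w' i + (S - 2 * b)) ((L @ Mid) @ [y0 + l + b])"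
proof -
  note cb = cover_basic[OF cov]
  define g where "g m = m + cnt n w' i m + l" for m
  have ok: "pass_ok m (code n w' m) (g m) (g (Suc m))" if m: "Suc i \<le> m" "m < j" for m
  proof -
    have mn: "m \<le> n" using m cb(5) by simp
    have im: "i < m" using m by simp
    consider "w' m < w' i" | "w' j < w' m" using cb(11)[OF im m(2)] by blast
    then show ?thesis
    proof cases
      case 1
      have "cnt n w' i m = cnt n w' i (Suc m) + 1" using cnt_step[OF mn, of w' i] 1 by simp
      moreover have "code n w' m + 1 \<le> cnt n w' i m" using cnt_comm[OF 1 mn] .
      ultimately show ?thesis unfolding pass_ok_def g_def by simp
    next
      case 2
      have "\<not> w' m < w' i" using 2 cb(9) by simp
      then have "cnt n w' i m = cnt n w' i (Suc m)" using cnt_step[OF mn, of w' i] by simp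
      moreover have "cnt n w' i (Suc m) + 1 + cc n w' i j \<le> code n w' m"
        using cnt_braid[OF cov im m(2) 2] .
      ultimately show ?thesis unfolding pass_ok_def g_def using l by simp
    qed
  qed
  have lj: "Suc i \<le> j" using cb(4) by simp
  have PB: "g (Suc i) \<le> g j \<and> 2 * (g j - g (Suc i)) \<le> S \<and>
    ms (g (Suc i) # concat (map (\<lambda>m. rev [m..<code n w' m + m]) [Suc i..<j])) (g j - g (Suc i))
       (S - 2 * (g j - g (Suc i))) (concat (map (\<lambda>m. rev [m..<code n w' m + m]) [Suc i..<j]) @ [g j])"
    unfolding S_def by (rule pass_blocks[OF lj ok])
  have Mid: "concat (map (\<lambda>m. rev [m..<code n w' m + m]) [Suc i..<j]) = Mid"
    unfolding Mid_def by (intro arg_cong[where f=concat] map_cong) (auto simp: blk_def)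
  have g1: "g (Suc i) = y0 + l" unfolding g_def y0_def using cnt_Suc_i[of n w' i] by simp
  have g2: "g j = j + code n w j + l" unfolding g_def using cnt_j[OF cov] by simp
  have bb: "g j - g (Suc i) = b" unfolding b_def g1 g2 by simp
  have y0le: "y0 \<le> j + code n w j" using PB g1 g2 by simp
  have PB': "ms ((y0 + l) # Mid) b (S - 2 * b) (Mid @ [y0 + l + b])"
  proof -
    have "y0 + l + b = g j" using g2 y0le unfolding b_def by simp
    moreover have "g j - (y0 + l) = b" using bb g1 by simp
    ultimately show ?thesis using PB unfolding Mid g1 by simp
  qed
  have LC: "ms ((y0 + l) # L) 0 (length L) (L @ [y0 + l])"
    unfolding L_def by (rule pass_comm) (auto simp: y0_def)
  have m1: "ms ([] @ ((y0 + l) # L) @ Mid) 0 (length L) ([] @ (L @ [y0 + l]) @ Mid)"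
    by (rule ms_ctx[OF LC])
  have m2: "ms (L @ ((y0 + l) # Mid) @ []) b (S - 2 * b) (L @ (Mid @ [y0 + l + b]) @ [])"
    by (rule ms_ctx[OF PB'])
  have "ms ((y0 + l) # (L @ Mid)) (0 + b) (length L + (S - 2 * b)) ((L @ Mid) @ [y0 + l + b])"
    using ms_trans[OF m1[simplified] m2[simplified]] by simp
  moreover have "length L = code n w' i" unfolding L_def by simp
  ultimately show ?thesis using y0le PB bb by simp
qed



definition np :: "(nat \<Rightarrow> nat) \<Rightarrow> nat \<times> nat \<Rightarrow> nat \<times> nat" where
  "np f p = (min (f (fst p)) (f (snd p)), max (f (fst p)) (f (snd p)))"

fun reflw :: "nat list \<Rightarrow> (nat \<times> nat) list" where
  "reflw [] = []"
| "reflw (r # rs) = (r, Suc r) # map (np (Transposition.transpose r (Suc r))) (reflw rs)"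

fun invc :: "('a \<Rightarrow> 'a \<Rightarrow> bool) \<Rightarrow> 'a list \<Rightarrow> nat" where
  "invc R [] = 0"
| "invc R (x # xs) = length (filter (R x) xs) + invc R xs"

definition cross :: "('a \<Rightarrow> 'a \<Rightarrow> bool) \<Rightarrow> 'a list \<Rightarrow> 'a list \<Rightarrow> nat" where
  "cross R xs ys = sum_list (map (\<lambda>x. length (filter (R x) ys)) xs)"

definition lexlt :: "nat \<times> nat \<Rightarrow> nat \<times> nat \<Rightarrow> bool" where
  "lexlt p q \<longleftrightarrow> fst p < fst q \<or> (fst p = fst q \<and> snd p < snd q)"

definition st :: "nat \<times> nat \<Rightarrow> nat set" where
  "st p = {fst p, snd p}"

definition R2 :: "nat \<times> nat \<Rightarrow> nat \<times> nat \<Rightarrow> bool" where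
  "R2 p q \<longleftrightarrow> lexlt p q \<and> st p \<inter> st q = {}"

lemma np_comp: "np f (np g p) = np (f \<circ> g) p"
  by (cases "g (fst p) \<le> g (snd p)") (auto simp: np_def min_def max_def)

lemma map_np_comp: "map (np f) (map (np g) xs) = map (np (f \<circ> g)) xs"
  by (simp add: np_comp)

lemma reflw_norm: "p \<in> set (reflw xs) \<Longrightarrow> fst p \<le> snd p"
  by (induction xs arbitrary: p) (auto simp: np_def)

lemma np_id: "fst p \<le> snd p \<Longrightarrow> np id p = p"
  by (cases p) (auto simp: np_def)

lemma reflw_append: "reflw (xs @ ys) = reflw xs @ map (np (word_perm xs)) (reflw ys)"
proof (induction xs)
  case Nil
  have "map (np (\<lambda>x. x)) (reflw ys) = reflw ys"
  proof (rule map_idI)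
    fix p assume "p \<in> set (reflw ys)"
    then have "fst p \<le> snd p" by (rule reflw_norm)
    then show "np (\<lambda>x. x) p = p" by (cases p) (simp add: np_def)
  qed
  then show ?case by simp
next
  case (Cons r xs)
  show ?case by (simp only: append_Cons reflw.simps Cons map_append map_np_comp word_perm.simps)
qed

lemma invc_append: "invc R (xs @ ys) = invc R xs + invc R ys + cross R xs ys"
  by (induction xs) (simp_all add: cross_def)

lemma cross_mset:
  assumes "mset xs = mset xs'" "mset ys = mset ys'"
  shows "cross R xs ys = cross R xs' ys'"
proof -
  have l: "length (filter (R x) ys) = length (filter (R x) ys')" for x
    using assms(2) by (metis mset_filter size_mset)
  have "cross R xs ys = sum_list (map (\<lambda>x. length (filter (R x) ys)) xs')"
    unfolding cross_def using assms(1) by (metis mset_map sum_mset_sum_list)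
  then show ?thesis unfolding cross_def using l by simp
qed

lemma invc_local:
  assumes "mset M' = mset M"
  shows "int (invc R (A @ M @ Z)) - int (invc R (A @ M' @ Z)) = int (invc R M) - int (invc R M')"
proof -
  have "mset (M' @ Z) = mset (M @ Z)" using assms by simp
  then have c1: "cross R A (M' @ Z) = cross R A (M @ Z)" by (intro cross_mset) auto
  have c2: "cross R M' Z = cross R M Z" using assms by (intro cross_mset) auto
  show ?thesis unfolding invc_append using c1 c2 by simp
qed

lemma st_np: "st (np f p) = f ` st p"
  by (auto simp: st_def np_def min_def max_def)

lemma lexlt_total: "p \<noteq> q \<Longrightarrow> lexlt p q \<or> lexlt q p"
  by (cases p; cases q) (auto simp: lexlt_def)

lemma lexlt_asym: "lexlt p q \<Longrightarrow> \<not> lexlt q p"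
  by (auto simp: lexlt_def)

lemma np_neq:
  assumes "inj f" "st p \<noteq> st q"
  shows "np f p \<noteq> np f q"
proof
  assume "np f p = np f q"
  then have "f ` st p = f ` st q" by (metis st_np)
  then show False using assms by (metis inj_image_eq_iff)
qed

lemma st_disj_np:
  assumes "inj f"
  shows "st (np f p) \<inter> st (np f q) = {} \<longleftrightarrow> st p \<inter> st q = {}"
  unfolding st_np using assms by (metis image_Int image_is_empty)

definition ind :: "bool \<Rightarrow> nat" where "ind b = (if b then 1 else 0)"

lemma invc2: "invc R [x, y] = ind (R x y)"
  by (simp add: ind_def)

lemma invc3: "invc R [x, y, z] = ind (R x y) + ind (R x z) + ind (R y z)"
  by (simp add: ind_def)

lemma pair_lex: "x \<noteq> y \<Longrightarrow> ind (lexlt x y) + ind (lexlt y x) = 1"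
  using lexlt_total[of x y] lexlt_asym[of x y] by (auto simp: ind_def)

lemma pair_R2_disj: "x \<noteq> y \<Longrightarrow> st x \<inter> st y = {} \<Longrightarrow> ind (R2 x y) + ind (R2 y x) = 1"
  using lexlt_total[of x y] lexlt_asym[of x y] by (auto simp: ind_def R2_def Int_commute)

lemma pair_R2_int: "st x \<inter> st y \<noteq> {} \<Longrightarrow> ind (R2 x y) + ind (R2 y x) = 0"
  by (auto simp: ind_def R2_def Int_commute)

lemma word_perm_inj: "inj (word_perm xs)"
  using bij_word_perm bij_is_inj by blast

lemma rev3_parity:
  assumes "x \<noteq> y" "x \<noteq> z" "y \<noteq> z"
    "st x \<inter> st y \<noteq> {}" "st x \<inter> st z \<noteq> {}" "st y \<inter> st z \<noteq> {}"
  shows "odd (invc lexlt (A @ [x, y, z] @ Z) + invc lexlt (A @ [z, y, x] @ Z)) \<and>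
         even (invc R2 (A @ [x, y, z] @ Z) + invc R2 (A @ [z, y, x] @ Z))"
proof -
  have m: "mset [z, y, x] = mset [x, y, z]" by simp
  have e1: "int (invc lexlt (A @ [x, y, z] @ Z)) - int (invc lexlt (A @ [z, y, x] @ Z)) =
      int (invc lexlt [x, y, z]) - int (invc lexlt [z, y, x])" by (rule invc_local[OF m])
  have e2: "int (invc R2 (A @ [x, y, z] @ Z)) - int (invc R2 (A @ [z, y, x] @ Z)) =
      int (invc R2 [x, y, z]) - int (invc R2 [z, y, x])" by (rule invc_local[OF m])
  have s1: "invc lexlt [x, y, z] + invc lexlt [z, y, x] = 3"
    unfolding invc3 using pair_lex[OF assms(1)] pair_lex[OF assms(2)] pair_lex[OF assms(3)] by linarith
  have s2: "invc R2 [x, y, z] + invc R2 [z, y, x] = 0"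
    unfolding invc3 using pair_R2_int[OF assms(4)] pair_R2_int[OF assms(5)] pair_R2_int[OF assms(6)] by linarith
  have o1: "odd (int (invc lexlt [x, y, z]) - int (invc lexlt [z, y, x]))"
  proof -
    have "int (invc lexlt [x, y, z]) - int (invc lexlt [z, y, x]) = 3 - 2 * int (invc lexlt [z, y, x])"
      using s1 by linarith
    moreover have "\<And>k::int. odd (3 - 2 * k)" by presburger
    ultimately show ?thesis by metis
  qed
  have "odd (int (invc lexlt (A @ [x, y, z] @ Z)) + int (invc lexlt (A @ [z, y, x] @ Z)))"
  proof -
    have "int (invc lexlt (A @ [x, y, z] @ Z)) + int (invc lexlt (A @ [z, y, x] @ Z)) =
       2 * int (invc lexlt (A @ [z, y, x] @ Z)) + (int (invc lexlt [x, y, z]) - int (invc lexlt [z, y, x]))"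
      using e1 by linarith
    moreover have "\<And>a b::int. odd b \<Longrightarrow> odd (2 * a + b)" by presburger
    ultimately show ?thesis using o1 by metis
  qed
  moreover have "even (int (invc R2 (A @ [x, y, z] @ Z)) + int (invc R2 (A @ [z, y, x] @ Z)))"
  proof -
    have "int (invc R2 (A @ [x, y, z] @ Z)) + int (invc R2 (A @ [z, y, x] @ Z)) =
       2 * int (invc R2 (A @ [z, y, x] @ Z))"
      using e2 s2 by linarith
    moreover have "\<And>a::int. even (2 * a)" by presburger
    ultimately show ?thesis by metis
  qed
  ultimately show ?thesis by (simp flip: of_nat_add)
qed

lemma np_meet:
  assumes "st p \<inter> st q \<noteq> {}"
  shows "st (np f p) \<inter> st (np f q) \<noteq> {}"
  using assms unfolding st_np by blast

lemma braid_refl: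
  "reflw [a, Suc a, a] = [(a, Suc a), (a, Suc (Suc a)), (Suc a, Suc (Suc a))]"
  "reflw [Suc a, a, Suc a] = [(Suc a, Suc (Suc a)), (a, Suc (Suc a)), (a, Suc a)]"
  by (auto simp: np_def transpose_def)

lemma braid_wp: "word_perm [a, Suc a, a] = word_perm [Suc a, a, Suc a]"
  by (auto simp: fun_eq_iff transpose_def)

lemma braid_st:
  "st (a, Suc a) \<noteq> st (a, Suc (Suc a))" "st (a, Suc a) \<noteq> st (Suc a, Suc (Suc a))"
  "st (a, Suc (Suc a)) \<noteq> st (Suc a, Suc (Suc a))"
  "st (a, Suc a) \<inter> st (a, Suc (Suc a)) \<noteq> {}" "st (a, Suc a) \<inter> st (Suc a, Suc (Suc a)) \<noteq> {}"
  "st (a, Suc (Suc a)) \<inter> st (Suc a, Suc (Suc a)) \<noteq> {}"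
  by (auto simp: st_def doubleton_eq_iff)

lemma move_parity:
  assumes "move u f v"
  shows "odd (invc lexlt (reflw u) + invc lexlt (reflw v)) \<and>
         (odd (invc R2 (reflw u) + invc R2 (reflw v)) \<longleftrightarrow> f = Comm)"
  using assms
proof (cases rule: move.cases)
  case (commute a b xs ys)
  have U: "u = xs @ [a, b] @ ys" and V: "v = xs @ [b, a] @ ys" and F: "f = Comm"
    and D: "a + 2 \<le> b \<or> b + 2 \<le> a" using commute by auto
  let ?g = "word_perm xs"
  have inj: "inj ?g" by (rule word_perm_inj)
  have wp: "word_perm [a, b] = word_perm [b, a]"
    using D by (auto simp: fun_eq_iff transpose_def)
  have ra: "reflw [a, b] = [(a, Suc a), (b, Suc b)]" "reflw [b, a] = [(b, Suc b), (a, Suc a)]"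
    using D by (auto simp: np_def transpose_def)
  let ?x = "np ?g (a, Suc a)" and ?y = "np ?g (b, Suc b)"
  have ru: "reflw u = reflw xs @ [?x, ?y] @ map (np (?g \<circ> word_perm [a, b])) (reflw ys)"
    unfolding U reflw_append ra by (simp add: map_np_comp np_comp)
  have rv: "reflw v = reflw xs @ [?y, ?x] @ map (np (?g \<circ> word_perm [a, b])) (reflw ys)"
    unfolding V reflw_append ra wp by (simp add: map_np_comp np_comp)
  have d: "st (a, Suc a) \<inter> st (b, Suc b) = {}" using D by (auto simp: st_def)
  have ne: "st (a, Suc a) \<noteq> st (b, Suc b)" using D by (auto simp: st_def doubleton_eq_iff)
  have xy: "?x \<noteq> ?y" by (rule np_neq[OF inj ne])
  have dxy: "st ?x \<inter> st ?y = {}" using st_disj_np[OF inj] d by blast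
  have m: "mset [?y, ?x] = mset [?x, ?y]" by simp
  have e1: "int (invc lexlt (reflw u)) - int (invc lexlt (reflw v)) = int (ind (lexlt ?x ?y)) - int (ind (lexlt ?y ?x))"
    unfolding ru rv invc2[symmetric] by (rule invc_local[OF m])
  have e2: "int (invc R2 (reflw u)) - int (invc R2 (reflw v)) = int (ind (R2 ?x ?y)) - int (ind (R2 ?y ?x))"
    unfolding ru rv invc2[symmetric] by (rule invc_local[OF m])
  have p1: "ind (lexlt ?x ?y) + ind (lexlt ?y ?x) = 1" by (rule pair_lex[OF xy])
  have p2: "ind (R2 ?x ?y) + ind (R2 ?y ?x) = 1" by (rule pair_R2_disj[OF xy dxy])
  have "odd (int (invc lexlt (reflw u)) + int (invc lexlt (reflw v)))"
  proof -
    have "int (invc lexlt (reflw u)) + int (invc lexlt (reflw v)) = 2 * int (invc lexlt (reflw v)) + int (ind (lexlt ?x ?y)) - int (ind (lexlt ?y ?x))"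
      using e1 by simp
    moreover have "odd (int (ind (lexlt ?x ?y)) - int (ind (lexlt ?y ?x)))"
      using p1 by (auto simp: ind_def split: if_splits)
    ultimately show ?thesis by simp
  qed
  moreover have "odd (int (invc R2 (reflw u)) + int (invc R2 (reflw v)))"
  proof -
    have "int (invc R2 (reflw u)) + int (invc R2 (reflw v)) = 2 * int (invc R2 (reflw v)) + int (ind (R2 ?x ?y)) - int (ind (R2 ?y ?x))"
      using e2 by simp
    moreover have "odd (int (ind (R2 ?x ?y)) - int (ind (R2 ?y ?x)))"
      using p2 by (auto simp: ind_def split: if_splits)
    ultimately show ?thesis by simp
  qed
  ultimately show ?thesis using F by (simp add: even_add flip: of_nat_add)
next
  case (braid1 xs a ys)
  have U: "u = xs @ [a, Suc a, a] @ ys" and V: "v = xs @ [Suc a, a, Suc a] @ ys" and F: "f = Braid"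
    using braid1 by auto
  let ?g = "word_perm xs"
  have inj: "inj ?g" by (rule word_perm_inj)
  let ?x = "np ?g (a, Suc a)" and ?y = "np ?g (a, Suc (Suc a))" and ?z = "np ?g (Suc a, Suc (Suc a))"
  have ru: "reflw u = reflw xs @ [?x, ?y, ?z] @ map (np (?g \<circ> word_perm [a, Suc a, a])) (reflw ys)"
    unfolding U reflw_append braid_refl by (simp add: map_np_comp np_comp)
  have rv: "reflw v = reflw xs @ [?z, ?y, ?x] @ map (np (?g \<circ> word_perm [a, Suc a, a])) (reflw ys)"
    unfolding V reflw_append braid_refl braid_wp by (simp add: map_np_comp np_comp)
  have "odd (invc lexlt (reflw u) + invc lexlt (reflw v)) \<and> even (invc R2 (reflw u) + invc R2 (reflw v))"
    unfolding ru rv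
    by (rule rev3_parity) (intro np_neq[OF inj] np_meet braid_st)+
  then show ?thesis using F by simp
next
  case (braid2 xs a ys)
  have U: "u = xs @ [Suc a, a, Suc a] @ ys" and V: "v = xs @ [a, Suc a, a] @ ys" and F: "f = Braid"
    using braid2 by auto
  let ?g = "word_perm xs"
  have inj: "inj ?g" by (rule word_perm_inj)
  let ?x = "np ?g (a, Suc a)" and ?y = "np ?g (a, Suc (Suc a))" and ?z = "np ?g (Suc a, Suc (Suc a))"
  have ru: "reflw u = reflw xs @ [?z, ?y, ?x] @ map (np (?g \<circ> word_perm [a, Suc a, a])) (reflw ys)"
    unfolding U reflw_append braid_refl braid_wp by (simp add: map_np_comp np_comp)
  have rv: "reflw v = reflw xs @ [?x, ?y, ?z] @ map (np (?g \<circ> word_perm [a, Suc a, a])) (reflw ys)"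
    unfolding V reflw_append braid_refl by (simp add: map_np_comp np_comp)
  have "odd (invc lexlt (reflw v) + invc lexlt (reflw u)) \<and> even (invc R2 (reflw v) + invc R2 (reflw u))"
    unfolding ru rv
    by (rule rev3_parity) (intro np_neq[OF inj] np_meet braid_st)+
  then show ?thesis using F by (simp add: add.commute)
qed


lemma length_kinds: "length fs = count_list fs Braid + count_list fs Comm"
proof (induction fs)
  case Nil then show ?case by simp
next
  case (Cons f fs) then show ?case by (cases f) auto
qed

lemma move_seq_parity:
  assumes "move_seq u fs v"
  shows "even (invc lexlt (reflw u) + invc lexlt (reflw v) + length fs) \<and>
         even (invc R2 (reflw u) + invc R2 (reflw v) + count_list fs Comm)"
  using assms
proof (induction rule: move_seq.induct)
  case (nil u) then show ?case by simp
next
  case (cons u f v fs x)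
  have mp: "odd (invc lexlt (reflw u) + invc lexlt (reflw v))"
    "odd (invc R2 (reflw u) + invc R2 (reflw v)) \<longleftrightarrow> f = Comm"
    using move_parity[OF cons.hyps(1)] by auto
  show ?case
  proof (cases f)
    case Comm then show ?thesis using mp cons.IH by (simp add: even_add; blast)
  next
    case Braid then show ?thesis using mp cons.IH by (simp add: even_add; blast)
  qed
qed

lemma parity_unique:
  assumes "move_seq u fs v" "move_seq u gs v"
  shows "even (count_list gs Braid) = even (count_list fs Braid) \<and>
         even (count_list gs Comm) = even (count_list fs Comm)"
proof -
  note p1 = move_seq_parity[OF assms(1)] and p2 = move_seq_parity[OF assms(2)]
  have c: "even (count_list gs Comm) = even (count_list fs Comm)"
    using p1 p2 by (simp add: even_add)
  have l: "even (length gs) = even (length fs)"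
    using p1 p2 by (simp add: even_add)
  then have "even (count_list gs Braid + count_list gs Comm) = even (count_list fs Braid + count_list fs Comm)"
    by (simp add: length_kinds)
  then show ?thesis using c by (simp add: even_add; blast)
qed



lemma upt_split3:
  assumes "a \<le> b" "b \<le> c"
  shows "[a..<c] = [a..<b] @ [b..<c]"
  using upt_add_eq_append[of a b "c - b"] assms by simp

lemma blocks_eq:
  assumes "\<And>m. lo \<le> m \<Longrightarrow> m < hi \<Longrightarrow> code n w m = code n w' m"
  shows "concat (map (blk n w) [lo..<hi]) = concat (map (blk n w') [lo..<hi])"
  using assms by (intro arg_cong[where f=concat] map_cong) (auto simp: blk_def)

lemma tail_eq:
  assumes cov: "covers_by n w w' i j"
  shows "concat (map (blk n w') [j..<n]) =
    rev [j + code n w j..<j + code n w j + cc n w' i j] @ concat (map (blk n w) [j..<n])"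
proof (cases "j < n")
  case True
  have r: "concat (map (blk n w) [Suc j..<n]) = concat (map (blk n w') [Suc j..<n])"
    using cov cover_basic(4)[OF cov] by (intro blocks_eq code_other) auto
  have e: "[j..<n] = j # [Suc j..<n]" using True by (simp add: upt_conv_Cons)
  have "blk n w' j = rev [j + code n w j..<j + code n w j + cc n w' i j] @ blk n w j"
  proof -
    have "[j..<(j + code n w j) + cc n w' i j] = [j..<j + code n w j] @ [j + code n w j..<j + code n w j + cc n w' i j]"
      by (rule upt_add_eq_append) simp
    then show ?thesis unfolding blk_def code_j[OF cov] by (simp add: add.commute add.left_commute)
  qed
  then show ?thesis unfolding e using r by simp
next
  case False
  then have jn: "j = n" using cover_basic(5)[OF cov] by simp
  have "code n w' n = 0" by (simp add: code_def)
  then have "cc n w' i j = 0" using code_j[OF cov] jn by simp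
  then show ?thesis using jn by simp
qed

lemma existence:
  assumes cov: "covers_by n w w' i j"
    and del: "delete_letter (row_word n w) I = concat (map (blk n w) [1..<i]) @
       (rev [Suc (i + code n w' i)..<i + code n w i] @ rev [i..<i + code n w' i]) @ concat (map (blk n w) [Suc i..<n])"
  defines "c \<equiv> cc n w' i j"
  defines "y0 \<equiv> Suc (i + code n w' i)"
  defines "b \<equiv> (j + code n w j) - y0"
  defines "S \<equiv> (\<Sum>m = Suc i..<j. code n w' m)"
  shows "\<exists>fs. move_seq (delete_letter (row_word n w) I) fs (row_word n w') \<and>
     count_list fs Braid = c * b \<and> count_list fs Comm = c * (code n w' i + (S - 2 * b)) \<and>
     (0 < c \<longrightarrow> y0 \<le> j + code n w j \<and> 2 * b \<le> S)"
proof -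
  note cb = cover_basic[OF cov]
  let ?L = "rev [i..<code n w' i + i]"
  let ?Mid = "concat (map (blk n w') [Suc i..<j])"
  let ?P = "concat (map (blk n w') [1..<i])"
  let ?T = "concat (map (blk n w) [j..<n])"
  let ?X = "rev [y0..<y0 + c]"
  let ?X' = "rev [j + code n w j..<j + code n w j + c]"
  have ci: "code n w i = code n w' i + 1 + c" using code_i[OF cov] by (simp add: c_def)
  have P: "concat (map (blk n w) [1..<i]) = ?P"
    using cov cb(4) by (intro blocks_eq code_other) auto
  have sp1: "[Suc i..<n] = [Suc i..<j] @ [j..<n]" using cb(4,5) by (intro upt_split3) auto
  have M: "concat (map (blk n w) [Suc i..<j]) = ?Mid"
    using cov by (intro blocks_eq code_other) auto
  have D: "delete_letter (row_word n w) I = ?P @ (?X @ (?L @ ?Mid)) @ ?T"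
    unfolding del P sp1 using M ci by (simp add: y0_def add.commute add.left_commute)
  have sp2: "[1..<n] = [1..<i] @ i # [Suc i..<j] @ [j..<n]"
  proof -
    have "[1..<n] = [1..<i] @ [i..<n]" using cb(3,4,5) by (intro upt_split3) auto
    moreover have "[i..<n] = i # [Suc i..<n]" using cb(4,5) by (simp add: upt_conv_Cons)
    ultimately show ?thesis using sp1 by simp
  qed
  have Tg: "row_word n w' = ?P @ ((?L @ ?Mid) @ ?X') @ ?T"
    unfolding row_word_blk sp2 using tail_eq[OF cov] by (simp add: blk_def c_def)
  show ?thesis
  proof (cases "c = 0")
    case True
    have "delete_letter (row_word n w) I = row_word n w'" unfolding D Tg using True by simp
    then show ?thesis using True by (intro exI[of _ "[]"]) (auto intro: move_seq.nil)
  next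
    case False
    have LP: "y0 \<le> j + code n w j \<and> 2 * b \<le> S \<and>
        ms ((y0 + l) # (?L @ ?Mid)) b (code n w' i + (S - 2 * b)) ((?L @ ?Mid) @ [y0 + l + b])"
      if "l < c" for l
      using that unfolding c_def y0_def b_def S_def by (rule letter_pass[OF cov])
    have LP0: "y0 \<le> j + code n w j" "2 * b \<le> S" using LP[of 0] False by auto
    have run: "ms (?X @ (?L @ ?Mid)) (c * b) (c * (code n w' i + (S - 2 * b))) ((?L @ ?Mid) @ rev [y0 + b..<y0 + c + b])"
      by (rule pass_run) (use LP in blast)
    have yb: "y0 + b = j + code n w j" using LP0 by (simp add: b_def)
    have yb2: "y0 + c + b = j + code n w j + c" using yb by linarith
    have "ms (?P @ (?X @ (?L @ ?Mid)) @ ?T) (c * b) (c * (code n w' i + (S - 2 * b))) (?P @ ((?L @ ?Mid) @ ?X') @ ?T)"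
      using ms_ctx[OF run[unfolded yb yb2], of ?P ?T] .
    then show ?thesis unfolding D[symmetric] Tg[symmetric] ms_def using LP0 by blast
  qed
qed

theorem proposition4p3:
  fixes n i j I :: nat and w w' :: "nat \<Rightarrow> nat"
  assumes cov: "covers_by n w w' i j"
    and I: "1 \<le> I" "I \<le> length (row_word n w)"
    and red: "reduced_word_of n (delete_letter (row_word n w) I) w'"
  shows "\<exists>fs. move_seq (delete_letter (row_word n w) I) fs (row_word n w')
     \<and> int (count_list fs Braid) =
         (int (code n w i) - int (code n w' i) - 1) *
         (int j - int i - 1 + int (code n w j) - int (code n w' i))
     \<and> int (count_list fs Comm) =
         (int (code n w i) - int (code n w' i) - 1) *
         ((\<Sum>k = i..<j. int (code n w' k))
           - 2 * (int j - int i - 1 + int (code n w j) - int (code n w' i)))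
     \<and> (\<forall>gs. move_seq (delete_letter (row_word n w) I) gs (row_word n w') \<longrightarrow>
          even (count_list gs Braid) = even (count_list fs Braid) \<and>
          even (count_list gs Comm) = even (count_list fs Comm))"
proof -
  note cb = cover_basic[OF cov]
  have wp: "w permutes {1..n}" by (rule cb(2))
  obtain m k q where mkq: "1 \<le> m" "m < n" "m \<le> k" "k < m + code n w m" "m < q" "q \<le> n"
     "std n w m q = Suc k"
     "delete_letter (row_word n w) I = concat (map (blk n w) [1..<m]) @ (rev [Suc k..<m + code n w m] @ rev [m..<k]) @ concat (map (blk n w) [Suc m..<n])"
     "word_perm (delete_letter (row_word n w) I) = w \<circ> Transposition.transpose m q"
    using delete_row_word[OF wp I] by blast
  have wd: "word_perm (delete_letter (row_word n w) I) = w'" using red by (simp add: reduced_word_of_def)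
  have ww: "w = w' \<circ> Transposition.transpose i j" using cov by (simp add: covers_by_def)
  have w'eq: "w' = w \<circ> Transposition.transpose i j" unfolding ww by (simp add: comp_assoc)
  have injw: "inj w" using permutes_inj[OF wp] .
  have weq: "w \<circ> Transposition.transpose m q = w \<circ> Transposition.transpose i j"
    using mkq(9) wd w'eq by simp
  have tt: "Transposition.transpose m q = Transposition.transpose i j"
  proof
    fix x
    have "w (Transposition.transpose m q x) = w (Transposition.transpose i j x)"
      using fun_cong[OF weq, of x] by simp
    then show "Transposition.transpose m q x = Transposition.transpose i j x"
      using injw unfolding inj_def by blast
  qed
  have tm: "Transposition.transpose i j m = q" using fun_cong[OF tt, of m] by simp
  have mi: "m = i" "q = j"
  proof -
    have "m = i"
    proof (rule ccontr)
      assume "m \<noteq> i"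
      show False
      proof (cases "m = j")
        case True then have "q = i" using tm by simp
        then show False using True mkq(5) cb(4) by simp
      next
        case False then have "q = m" using tm \<open>m \<noteq> i\<close> by simp
        then show False using mkq(5) by simp
      qed
    qed
    then show "m = i" "q = j" using tm by auto
  qed
  have k: "k = i + code n w' i" using mkq(7) std_ij[OF cov] mi by simp
  have del: "delete_letter (row_word n w) I = concat (map (blk n w) [1..<i]) @
       (rev [Suc (i + code n w' i)..<i + code n w i] @ rev [i..<i + code n w' i]) @ concat (map (blk n w) [Suc i..<n])"
    using mkq(8) mi k by simp
  define c where "c = cc n w' i j"
  define y0 where "y0 = Suc (i + code n w' i)"
  define b where "b = (j + code n w j) - y0"
  define S where "S = (\<Sum>m = Suc i..<j. code n w' m)"
  obtain fs where fs: "move_seq (delete_letter (row_word n w) I) fs (row_word n w')"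
    "count_list fs Braid = c * b" "count_list fs Comm = c * (code n w' i + (S - 2 * b))"
    "0 < c \<longrightarrow> y0 \<le> j + code n w j \<and> 2 * b \<le> S"
    using existence[OF cov del, folded c_def y0_def, folded b_def S_def] by blast
  have f1: "int (code n w i) - int (code n w' i) - 1 = int c" using code_i[OF cov] by (simp add: c_def)
  have sumS: "(\<Sum>k = i..<j. int (code n w' k)) = int (code n w' i) + int S"
    using sum.atLeast_Suc_lessThan[of i j "\<lambda>k. int (code n w' k)"] cb(4) by (simp add: S_def)
  have B: "int (count_list fs Braid) =
         (int (code n w i) - int (code n w' i) - 1) *
         (int j - int i - 1 + int (code n w j) - int (code n w' i))"
  proof (cases "c = 0")
    case True then show ?thesis using fs(2) f1 by simp
  next
    case False
    then have "y0 \<le> j + code n w j" using fs(4) by simp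
    then have "int b = int j - int i - 1 + int (code n w j) - int (code n w' i)"
      by (simp add: b_def y0_def of_nat_diff)
    then show ?thesis using fs(2) f1 by simp
  qed
  have C: "int (count_list fs Comm) =
         (int (code n w i) - int (code n w' i) - 1) *
         ((\<Sum>k = i..<j. int (code n w' k))
           - 2 * (int j - int i - 1 + int (code n w j) - int (code n w' i)))"
  proof (cases "c = 0")
    case True then show ?thesis using fs(3) f1 by simp
  next
    case False
    then have h: "y0 \<le> j + code n w j" "2 * b \<le> S" using fs(4) by auto
    then have "int b = int j - int i - 1 + int (code n w j) - int (code n w' i)"
      by (simp add: b_def y0_def of_nat_diff)
    moreover have "int (code n w' i + (S - 2 * b)) = int (code n w' i) + int S - 2 * int b"
      using h(2) by (simp add: of_nat_diff)
    ultimately show ?thesis using fs(3) f1 sumS by simp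
  qed
  show ?thesis
  proof (intro exI[of _ fs] conjI allI impI)
    show "move_seq (delete_letter (row_word n w) I) fs (row_word n w')" by (rule fs(1))
    show "int (count_list fs Braid) =
         (int (code n w i) - int (code n w' i) - 1) *
         (int j - int i - 1 + int (code n w j) - int (code n w' i))" by (rule B)
    show "int (count_list fs Comm) =
         (int (code n w i) - int (code n w' i) - 1) *
         ((\<Sum>k = i..<j. int (code n w' k))
           - 2 * (int j - int i - 1 + int (code n w j) - int (code n w' i)))" by (rule C)
    fix gs assume gs: "move_seq (delete_letter (row_word n w) I) gs (row_word n w')"
    show "even (count_list gs Braid) = even (count_list fs Braid)"
      using parity_unique[OF fs(1) gs] by simp
    show "even (count_list gs Comm) = even (count_list fs Comm)"
      using parity_unique[OF fs(1) gs] by simp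
  qed
qed


end
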